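(* Let $n\ge 2$. There is a constant $c'_n>0$ such that for all sufficiently large $B$, the number of $n\times n$ integer matrices with all entries bounded in absolute value by $B$ whose characteristic polynomial has a linear factor over $\mathbb{Z}$ is at least $c'_n B^{n^2-n+1}\log B$. *)

theory Defs
  imports Complex_Main "Jordan_Normal_Form.Char_Poly"
begin

end

theory Submission
  imports Defs "HOL-Number_Theory.Totient" "HOL-Library.FuncSet"
begin


lemma aux1: fixes x s :: real assumes "x \<ge> 0" shows "s / ((x+1)*(x+2)) + s/(x+2) = s/(x+1)"
proof -
  have a: "x+1 \<noteq> 0" "x+2 \<noteq> 0" using assms by auto
  have "s/(x+2) = s*(x+1)/((x+1)*(x+2))" using a by simp
  then have "s / ((x+1)*(x+2)) + s/(x+2) = (s + s*(x+1))/((x+1)*(x+2))" by (simp add: add_divide_distrib)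
  also have "s + s*(x+1) = s*(x+2)" by (simp add: algebra_simps)
  also have "s*(x+2)/((x+1)*(x+2)) = s/(x+1)" using a by simp
  finally show ?thesis .
qed
lemma aux2: fixes d :: real assumes "d > 0" shows "(d + 1) / 2 / (d * (d + 1)) = (1 / d) / 2"
proof -
  have "d + 1 \<noteq> 0" using assms by simp
  then show ?thesis using assms by simp
qed

lemma ln_le_sum_inv: "ln (real X + 1) \<le> (\<Sum>d=1..X. 1 / real d)"
proof (induction X)
  case 0 then show ?case by simp
next
  case (Suc X)
  have e: "real (Suc X) + 1 = (real X + 1) * (1 + 1 / (real X + 1))"
    by (simp add: field_simps)
  have "ln (real (Suc X) + 1) = ln (real X + 1) + ln (1 + 1 / (real X + 1))"
    unfolding e by (rule ln_mult_pos) (auto simp: add_pos_nonneg)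
  also have "ln (1 + 1 / (real X + 1)) \<le> 1 / (real X + 1)"
    by (rule ln_add_one_self_le_self) simp
  finally show ?case using Suc by (simp add: add.commute)
qed

lemma card_multiples_le: "card {k\<in>{1..m::nat}. d dvd k} \<le> m div d"
proof (cases "d = 0")
  case True then show ?thesis by simp
next
  case False
  have "{k\<in>{1..m::nat}. d dvd k} \<subseteq> (\<lambda>j. d * j) ` {1..m div d}"
  proof
    fix k assume "k \<in> {k\<in>{1..m::nat}. d dvd k}"
    then obtain j where j: "k = d * j" "1 \<le> k" "k \<le> m" by auto
    then have "j \<ge> 1" by (cases j) auto
    moreover have "j \<le> m div d" using j False
      by (metis div_le_mono nonzero_mult_div_cancel_left)
    ultimately show "k \<in> (\<lambda>j. d * j) ` {1..m div d}" using j by auto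
  qed
  then have "card {k\<in>{1..m::nat}. d dvd k} \<le> card ((\<lambda>j. d * j) ` {1..m div d})"
    by (intro card_mono) auto
  also have "\<dots> \<le> card {1..m div d}" by (rule card_image_le) auto
  finally show ?thesis by simp
qed

lemma sum_totient_div: "real m * (real m + 1) / 2 \<le> real m * (\<Sum>d=1..m. real (totient d) / real d)"
proof -
  have "(\<Sum>k=1..m. real k) = (\<Sum>k=1..m. \<Sum>d=1..m. if d dvd k then real (totient d) else 0)"
  proof (rule sum.cong[OF refl])
    fix k assume k: "k \<in> {1..m}"
    have "{d. d dvd k} = {d\<in>{1..m}. d dvd k}" using k
      by (auto dest: dvd_imp_le intro: Nat.gr0I)
    then have "real k = (\<Sum>d\<in>{d\<in>{1..m}. d dvd k}. real (totient d))"
      using totient_divisor_sum[of k] by (metis of_nat_sum)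
    also have "\<dots> = (\<Sum>d=1..m. if d dvd k then real (totient d) else 0)"
      by (rule sum.inter_filter) simp
    finally show "real k = \<dots>" .
  qed
  also have "\<dots> = (\<Sum>d=1..m. \<Sum>k=1..m. if d dvd k then real (totient d) else 0)"
    by (rule sum.swap)
  also have "\<dots> = (\<Sum>d=1..m. real (totient d) * real (card {k\<in>{1..m}. d dvd k}))"
  proof (intro sum.cong refl)
    fix d
    have "(\<Sum>k=1..m. if d dvd k then real (totient d) else 0) = (\<Sum>k\<in>{k\<in>{1..m}. d dvd k}. real (totient d))"
      by (rule sum.inter_filter[symmetric]) simp
    also have "\<dots> = real (totient d) * real (card {k\<in>{1..m}. d dvd k})" by simp
    finally show "(\<Sum>k=1..m. if d dvd k then real (totient d) else 0) = real (totient d) * real (card {k\<in>{1..m}. d dvd k})" .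
  qed
  also have "\<dots> \<le> (\<Sum>d=1..m. real (totient d) * (real m / real d))"
  proof (intro sum_mono mult_left_mono)
    fix d assume d: "d \<in> {1..m}"
    have "real (card {k\<in>{1..m}. d dvd k}) \<le> real (m div d)"
      using card_multiples_le by simp
    also have "\<dots> \<le> real m / real d" by (rule of_nat_div_le_of_nat)
    finally show "real (card {k\<in>{1..m}. d dvd k}) \<le> real m / real d" .
  qed simp
  also have "\<dots> = real m * (\<Sum>d=1..m. real (totient d) / real d)"
    by (simp add: sum_distrib_left)  (intro sum.cong refl; simp)
  finally have "(\<Sum>k=1..m. real k) \<le> real m * (\<Sum>d=1..m. real (totient d) / real d)" .
  moreover have "(\<Sum>k=1..m. real k) = real m * (real m + 1) / 2"
  proof (induction m)
    case (Suc m) then show ?case by (simp add: field_simps)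
  qed simp
  ultimately show ?thesis by simp
qed

lemma S_lower: assumes "m \<ge> 1" shows "(real m + 1) / 2 \<le> (\<Sum>d=1..m. real (totient d) / real d)"
proof -
  have "real m * ((real m + 1) / 2) \<le> real m * (\<Sum>d=1..m. real (totient d) / real d)"
    using sum_totient_div[of m] by simp
  then show ?thesis using assms by (simp add: mult_le_cancel_left)
qed

lemma abel: fixes a :: "nat \<Rightarrow> real"
  shows "(\<Sum>d=1..X. a d / real d) = (\<Sum>d=1..X. (\<Sum>e=1..d. a e) / (real d * (real d + 1))) + (\<Sum>e=1..X. a e) / (real X + 1)"
proof (induction X)
  case 0 then show ?case by simp
next
  case (Suc X)
  let ?S = "\<lambda>d. (\<Sum>e=1..d. a e)"
  have "(\<Sum>d=1..Suc X. a d / real d) = (\<Sum>d=1..X. a d / real d) + a (Suc X) / (real X + 1)"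
    by (simp add: add.commute)
  also have "\<dots> = (\<Sum>d=1..X. ?S d / (real d * (real d + 1))) + ?S X / (real X + 1) + a (Suc X) / (real X + 1)"
    using Suc by simp
  also have "\<dots> = (\<Sum>d=1..Suc X. ?S d / (real d * (real d + 1))) + ?S (Suc X) / (real (Suc X) + 1)"
  proof -
    have k: "?S (Suc X) / ((real X + 1) * (real X + 2)) + ?S (Suc X) / (real X + 2) = ?S (Suc X) / (real X + 1)"
      by (rule aux1) simp
    have "?S (Suc X) = ?S X + a (Suc X)" by simp
    then have k2: "?S (Suc X) / (real X + 1) = ?S X / (real X + 1) + a (Suc X) / (real X + 1)"
      by (simp add: add_divide_distrib)
    have e1: "real (Suc X) * (real (Suc X) + 1) = (real X + 1) * (real X + 2)"
      by (simp add: algebra_simps)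
    have e2: "real (Suc X) + 1 = real X + 2" by simp
    have "(\<Sum>d=1..Suc X. ?S d / (real d * (real d + 1))) = (\<Sum>d=1..X. ?S d / (real d * (real d + 1))) + ?S (Suc X) / (real (Suc X) * (real (Suc X) + 1))"
      by (simp add: sum.cl_ivl_Suc)
    then have "(\<Sum>d=1..Suc X. ?S d / (real d * (real d + 1))) = (\<Sum>d=1..X. ?S d / (real d * (real d + 1))) + ?S (Suc X) / ((real X + 1) * (real X + 2))"
      by (simp only: e1)
    then show ?thesis unfolding e2 using k k2 by linarith
  qed
  finally show ?case .
qed

lemma totient_sum_log: "ln (real X + 1) / 2 \<le> (\<Sum>d=1..X. real (totient d) / (real d)^2)"
proof -
  let ?a = "\<lambda>d. real (totient d) / real d"
  have "ln (real X + 1) / 2 \<le> (\<Sum>d=1..X. 1 / real d) / 2" using ln_le_sum_inv[of X] by simp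
  also have "\<dots> = (\<Sum>d=1..X. (1 / real d) / 2)"
    by (simp add: sum_divide_distrib)
  also have "\<dots> \<le> (\<Sum>d=1..X. (\<Sum>e=1..d. ?a e) / (real d * (real d + 1)))"
  proof (intro sum_mono)
    fix d assume d: "d \<in> {1..X}"
    have "(real d + 1) / 2 / (real d * (real d + 1)) \<le> (\<Sum>e=1..d. ?a e) / (real d * (real d + 1))"
      using S_lower[of d] d by (intro divide_right_mono) auto
    moreover have "(real d + 1) / 2 / (real d * (real d + 1)) = (1 / real d) / 2"
      using d by (intro aux2) auto
    ultimately show "(1 / real d) / 2 \<le> (\<Sum>e=1..d. ?a e) / (real d * (real d + 1))" by simp
  qed
  also have "\<dots> \<le> (\<Sum>d=1..X. (\<Sum>e=1..d. ?a e) / (real d * (real d + 1))) + (\<Sum>e=1..X. ?a e) / (real X + 1)"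
    by (intro add_increasing2 divide_nonneg_pos sum_nonneg) auto
  also have "\<dots> = (\<Sum>d=1..X. ?a d / real d)"
    by (rule abel[symmetric])
  also have "\<dots> = (\<Sum>d=1..X. real (totient d) / (real d)^2)"
    by (simp add: power2_eq_square)
  finally show ?thesis .
qed




definition lo :: "nat \<Rightarrow> int \<Rightarrow> nat \<Rightarrow> nat \<Rightarrow> int" where
  "lo n K i j = (if j = i then int n * K else - K)"

definition Row :: "nat \<Rightarrow> int \<Rightarrow> (nat \<Rightarrow> int) \<Rightarrow> nat \<Rightarrow> (nat \<Rightarrow> int) set" where
  "Row n K v i = {x \<in> PiE {..<n} (\<lambda>j. {- (int n * int n * K) .. int n * int n * K}).
      (\<forall>j\<in>{1..<n}. lo n K i j \<le> x j \<and> x j \<le> lo n K i j + K) \<and> (\<Sum>j<n. x j * v j) = 0}"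

definition Vd :: "nat \<Rightarrow> nat \<Rightarrow> (nat \<Rightarrow> int) set" where
  "Vd n d = PiE {..<n} (\<lambda>j. if j = 0 then {int d} else if j = n - 1 then int ` totatives d else {- int d .. int d})"

lemma sum_split3: fixes n :: nat assumes "n \<ge> 2"
  shows "(\<Sum>j<n. g j) = g 0 + (\<Sum>j\<in>{1..<n-1}. g j) + (g (n-1) :: 'a :: comm_monoid_add)"
proof -
  have "(\<Sum>j<n. g j) = (\<Sum>j\<in>{0..<n}. g j)" by (intro sum.cong) auto
  also have "\<dots> = g 0 + (\<Sum>j\<in>{Suc 0..<n}. g j)" using assms by (subst sum.atLeast_Suc_lessThan) auto
  also have "{Suc 0..<n} = {1..<Suc (n-1)}" using assms by auto
  also have "(\<Sum>j\<in>{1..<Suc (n-1)}. g j) = (\<Sum>j\<in>{1..<n-1}. g j) + g (n-1)"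
    using assms by (subst sum.atLeastLessThan_Suc) auto
  finally show ?thesis by (simp add: add.assoc)
qed

lemma prod_split3: fixes n :: nat assumes "n \<ge> 2"
  shows "(\<Prod>j<n. g j) = g 0 * (\<Prod>j\<in>{1..<n-1}. g j) * (g (n-1) :: 'a :: comm_monoid_mult)"
proof -
  have "(\<Prod>j<n. g j) = (\<Prod>j\<in>{0..<n}. g j)" by (intro prod.cong) auto
  also have "\<dots> = g 0 * (\<Prod>j\<in>{Suc 0..<n}. g j)" using assms by (subst prod.atLeast_Suc_lessThan) auto
  also have "{Suc 0..<n} = {1..<Suc (n-1)}" using assms by auto
  also have "(\<Prod>j\<in>{1..<Suc (n-1)}. g j) = (\<Prod>j\<in>{1..<n-1}. g j) * g (n-1)"
    using assms by (subst prod.atLeastLessThan_Suc) auto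
  finally show ?thesis by (simp add: mult.assoc)
qed

lemma finite_Row: "finite (Row n K v i)"
  unfolding Row_def by (rule finite_subset[OF _ finite_PiE[of "{..<n}" "\<lambda>j. {- (int n * int n * K) .. int n * int n * K}"]]) auto

lemma card_Vd: assumes "n \<ge> 2"
  shows "card (Vd n d) = totient d * (2 * d + 1) ^ (n - 2)"
proof -
  have "card (Vd n d) = (\<Prod>j<n. card (if j = 0 then {int d} else if j = n - 1 then int ` totatives d else {- int d .. int d}))"
    unfolding Vd_def by (rule card_PiE) simp
  also have "\<dots> = 1 * (\<Prod>j\<in>{1..<n-1}. card {- int d .. int d}) * card (int ` totatives d)"
    using assms by (subst prod_split3) (auto intro!: prod.cong)
  also have "card (int ` totatives d) = totient d"
    by (simp add: card_image totient_def)
  also have "(\<Prod>j\<in>{1..<n-1}. card {- int d .. int d}) = (2 * d + 1) ^ (n - 2)"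
  proof -
    have "card {- int d .. int d} = 2 * d + 1" by simp
    moreover have "n - 1 - 1 = n - 2" by simp
    ultimately show ?thesis by (metis card_atLeastLessThan prod_constant)
  qed
  finally show ?thesis by simp
qed

lemma Vd_props: assumes "v \<in> Vd n d" "n \<ge> 2"
  shows "v 0 = int d" "coprime (v (n-1)) (int d)" "1 \<le> v (n-1)" "v (n-1) \<le> int d"
    "\<And>j. j < n \<Longrightarrow> \<bar>v j\<bar> \<le> int d"
proof -
  have nz: "n - 1 \<noteq> 0" "n - 1 < n" using assms by auto
  have "0 \<in> {..<n}" using assms by auto
  then show "v 0 = int d" using assms unfolding Vd_def PiE_iff by (auto dest!: bspec[where x=0])
  from assms have "v (n-1) \<in> int ` totatives d" unfolding Vd_def PiE_iff using nz by (auto dest!: bspec[where x="n-1"])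
  then obtain k where k: "v (n-1) = int k" "k \<in> totatives d" by auto
  then show "coprime (v (n-1)) (int d)" "1 \<le> v (n-1)" "v (n-1) \<le> int d"
    by (auto simp: in_totatives_iff)
  show "\<bar>v j\<bar> \<le> int d" if "j < n" for j
  proof -
    have "v j \<in> (if j = 0 then {int d} else if j = n - 1 then int ` totatives d else {- int d .. int d})"
      using assms that unfolding Vd_def PiE_iff by auto
    then show ?thesis by (auto split: if_splits simp: in_totatives_iff)
  qed
qed


lemma Row_card:
  fixes n d :: nat and K :: int
  assumes n: "n \<ge> 2" and K: "K \<ge> 1" and d: "d \<ge> 1" and v: "v \<in> Vd n d" and i: "i < n"
  shows "(K+1)^(n-2) * ((K+1) div int d) \<le> int (card (Row n K v i))"
proof -
  define m where "m = n - 1"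
  define J where "J = {1..<m}"
  have m: "m \<noteq> 0" "m < n" "m \<notin> J" "0 \<notin> J" "J \<subseteq> {1..<n}" "card J = n - 2"
    using n unfolding m_def J_def by auto
  have v0: "v 0 = int d" and cop: "coprime (v m) (int d)" and vm1: "1 \<le> v m" and vmd: "v m \<le> int d"
    and vb: "\<And>j. j < n \<Longrightarrow> \<bar>v j\<bar> \<le> int d"
    using Vd_props[OF v n] unfolding m_def by auto
  have "gcd (v m) (int d) = 1" using cop by simp
  then obtain u w where uw: "u * v m + w * int d = 1" using bezout_int[of "v m" "int d"] by auto
  define q where "q = (K+1) div int d"
  define a where "a = lo n K i m"
  define s where "s y = (\<Sum>j\<in>J. y j * v j)" for y :: "nat \<Rightarrow> int"
  define c where "c y = - s y * u" for y
  define xm where "xm y t = a + (c y - a) mod int d + int d * t" for y t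
  define x0 where "x0 y t = - (s y * w + (t - (c y - a) div int d) * v m)" for y t
  define F where "F = (\<lambda>(y, t). (\<lambda>j. if j = 0 then x0 y t else if j \<in> J then y j else if j = m then xm y t else undefined))"
  define D where "D = PiE J (\<lambda>j. {lo n K i j .. lo n K i j + K}) \<times> {0..<q}"
  have dpos: "int d > 0" using d by simp
  have key: "int d * x0 y t + s y + xm y t * v m = 0" for y t
  proof -
    define Q where "Q = (c y - a) div int d"
    define r where "r = (c y - a) mod int d"
    have e1: "c y - a = int d * Q + r" unfolding Q_def r_def by simp
    have e2: "xm y t = a + r + int d * t" unfolding xm_def r_def by simp
    have e3: "x0 y t = - (s y * w + (t - Q) * v m)" unfolding x0_def Q_def by simp
    have e4: "c y = - s y * u" unfolding c_def by simp
    have ar: "a + r = - (s y * u) - int d * Q" using e1 e4 by linarith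
    have z: "1 - u * v m - w * int d = 0" using uw by linarith
    have "int d * x0 y t + s y + xm y t * v m = s y * (1 - u * v m - w * int d)"
      unfolding e2 e3 ar by (simp add: algebra_simps)
    then show ?thesis unfolding z by simp
  qed
  have intv: "lo n K i j \<le> z \<Longrightarrow> z \<le> lo n K i j + K \<Longrightarrow> \<bar>z\<bar> \<le> (int n + 1) * K" for j z
  proof -
    assume a: "lo n K i j \<le> z" "z \<le> lo n K i j + K"
    have h: "0 \<le> K * int n" using K by simp
    have e: "(int n + 1) * K = K * int n + K" by (simp add: algebra_simps)
    show "\<bar>z\<bar> \<le> (int n + 1) * K"
    proof (cases "j = i")
      case True
      with a have "K * int n \<le> z" "z \<le> K * int n + K" by (simp_all add: lo_def algebra_simps)
      then show ?thesis using h unfolding e by linarith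
    next
      case False
      with a have "- K \<le> z" "z \<le> 0" by (simp_all add: lo_def)
      then show ?thesis using h unfolding e by linarith
    qed
  qed
  have Dsub: "F ` D \<subseteq> Row n K v i"
  proof
    fix x assume "x \<in> F ` D"
    then obtain y t where yt: "(y, t) \<in> D" and x: "x = F (y, t)" by auto
    from yt have y: "y \<in> PiE J (\<lambda>j. {lo n K i j .. lo n K i j + K})" and t: "0 \<le> t" "t < q"
      unfolding D_def by auto
    have x_0: "x 0 = x0 y t" and x_J: "\<And>j. j \<in> J \<Longrightarrow> x j = y j" and x_m: "x m = xm y t"
      and x_out: "\<And>j. j \<notin> {..<n} \<Longrightarrow> x j = undefined"
      using m unfolding x F_def J_def by auto
    have xm_lo: "a \<le> xm y t" unfolding xm_def using t dpos by simp
    have dq: "int d * q \<le> K + 1"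
    proof -
      have "int d * q + (K+1) mod int d = K + 1" unfolding q_def by simp
      moreover have "(K+1) mod int d \<ge> 0" using dpos by simp
      ultimately show ?thesis by linarith
    qed
    have xm_hi: "xm y t \<le> a + K"
    proof -
      have "(c y - a) mod int d < int d" using dpos by simp
      moreover have "int d * t \<le> int d * (q - 1)" using t dpos by (intro mult_left_mono) auto
      ultimately show ?thesis unfolding xm_def using dq by (simp add: algebra_simps)
    qed
    have box: "\<forall>j\<in>{1..<n}. lo n K i j \<le> x j \<and> x j \<le> lo n K i j + K"
    proof
      fix j assume j: "j \<in> {1..<n}"
      show "lo n K i j \<le> x j \<and> x j \<le> lo n K i j + K"
      proof (cases "j \<in> J")
        case True then show ?thesis using y x_J[OF True] by (auto simp: PiE_iff)
      next
        case False
        then have "j = m" using j unfolding J_def m_def by auto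
        then show ?thesis using x_m xm_lo xm_hi unfolding a_def by simp
      qed
    qed
    have xb: "\<bar>x j\<bar> \<le> (int n + 1) * K" if "j \<in> {1..<n}" for j
      using box that intv by blast
    have split: "(\<Sum>j<n. x j * v j) = x 0 * v 0 + (\<Sum>j\<in>{1..<n-1}. x j * v j) + x (n-1) * v (n-1)"
      by (rule sum_split3[OF n])
    have sJ: "(\<Sum>j\<in>{1..<n-1}. x j * v j) = s y"
      unfolding s_def J_def m_def using x_J unfolding J_def m_def by (intro sum.cong) auto
    have sumzero: "(\<Sum>j<n. x j * v j) = 0"
      unfolding split sJ using x_0 x_m key[of y t] v0 unfolding m_def by (simp add: algebra_simps)
    have split1: "(\<Sum>j\<in>{1..<n}. x j * v j) = s y + xm y t * v m"
    proof -
      have "(\<Sum>j<n. x j * v j) = x 0 * v 0 + (\<Sum>j\<in>{1..<n}. x j * v j)"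
      proof -
        have "{..<n} = insert 0 {1..<n}" using n by auto
        then show ?thesis by simp
      qed
      then show ?thesis using sumzero key[of y t] x_0 v0 by (simp add: algebra_simps)
    qed
    have "\<bar>\<Sum>j\<in>{1..<n}. x j * v j\<bar> \<le> (\<Sum>j\<in>{1..<n}. (int n + 1) * K * int d)"
    proof -
      have "\<bar>\<Sum>j\<in>{1..<n}. x j * v j\<bar> \<le> (\<Sum>j\<in>{1..<n}. \<bar>x j * v j\<bar>)" by (rule sum_abs)
      also have "\<dots> \<le> (\<Sum>j\<in>{1..<n}. (int n + 1) * K * int d)"
      proof (intro sum_mono)
        fix j assume j: "j \<in> {1..<n}"
        have "\<bar>x j * v j\<bar> = \<bar>x j\<bar> * \<bar>v j\<bar>" by (simp add: abs_mult)
        also have "\<dots> \<le> (int n + 1) * K * int d"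
          using xb[OF j] vb[of j] j by (intro mult_mono) auto
        finally show "\<bar>x j * v j\<bar> \<le> (int n + 1) * K * int d" .
      qed
      finally show ?thesis .
    qed
    also have "\<dots> = (int n - 1) * ((int n + 1) * K) * int d" using n by (simp add: of_nat_diff)
    finally have "\<bar>int d * x 0\<bar> \<le> (int n - 1) * ((int n + 1) * K) * int d"
      using key[of y t] split1 x_0 by (simp add: abs_minus_commute)
    then have "int d * \<bar>x 0\<bar> \<le> int d * ((int n - 1) * ((int n + 1) * K))"
      by (simp add: abs_mult algebra_simps)
    then have "\<bar>x 0\<bar> \<le> (int n - 1) * ((int n + 1) * K)" using dpos by simp
    also have "\<dots> \<le> int n * int n * K" using K by (simp add: algebra_simps)
    finally have x0b: "\<bar>x 0\<bar> \<le> int n * int n * K" .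
    have nnK: "(int n + 1) * K \<le> int n * int n * K"
    proof -
      have "2 * int n \<le> int n * int n" using n by (intro mult_right_mono) auto
      then have "int n + 1 \<le> int n * int n" using n by linarith
      then show ?thesis using K by (intro mult_right_mono) auto
    qed
    have "x \<in> PiE {..<n} (\<lambda>j. {- (int n * int n * K) .. int n * int n * K})"
    proof (rule PiE_I)
      fix j assume j: "j \<in> {..<n}"
      show "x j \<in> {- (int n * int n * K) .. int n * int n * K}"
      proof (cases "j = 0")
        case True then show ?thesis using x0b by auto
      next
        case False then have "j \<in> {1..<n}" using j by auto
        then show ?thesis using xb[of j] nnK by auto
      qed
    qed (use x_out in auto)
    then show "x \<in> Row n K v i" unfolding Row_def using box sumzero by auto
  qed
  have inj: "inj_on F D"
  proof (rule inj_onI)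
    fix p p' assume p: "p \<in> D" and p': "p' \<in> D" and eq: "F p = F p'"
    obtain y t where yt: "p = (y, t)" by (cases p)
    obtain y' t' where yt': "p' = (y', t')" by (cases p')
    have y: "y \<in> PiE J (\<lambda>j. {lo n K i j .. lo n K i j + K})" and y': "y' \<in> PiE J (\<lambda>j. {lo n K i j .. lo n K i j + K})"
      using p p' yt yt' unfolding D_def by auto
    have "y j = y' j" if "j \<in> J" for j
      using fun_cong[OF eq, of j] that m unfolding yt yt' F_def by auto
    then have yy: "y = y'" using y y' by (intro PiE_ext) auto
    have "xm y t = xm y' t'" using fun_cong[OF eq, of m] m unfolding yt yt' F_def by auto
    then have "t = t'" using yy dpos unfolding xm_def by simp
    then show "p = p'" using yy yt yt' by simp
  qed
  have cardD: "int (card D) = (K+1)^(n-2) * q"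
  proof -
    have "card D = card (PiE J (\<lambda>j. {lo n K i j .. lo n K i j + K})) * card {0..<q}"
      unfolding D_def by (rule card_cartesian_product)
    also have "card (PiE J (\<lambda>j. {lo n K i j .. lo n K i j + K})) = (\<Prod>j\<in>J. nat (K + 1))"
      unfolding J_def by (subst card_PiE) auto
    also have "\<dots> = nat (K+1) ^ (n-2)" using m by simp
    also have "card {0..<q} = nat q" by simp
    finally have "card D = nat (K+1) ^ (n-2) * nat q" .
    moreover have "q \<ge> 0" unfolding q_def using K dpos by (simp add: pos_imp_zdiv_nonneg_iff)
    ultimately show ?thesis using K by (simp add: of_nat_power)
  qed
  have "card D \<le> card (Row n K v i)"
    by (rule card_inj_on_le[OF inj Dsub finite_Row])
  then show ?thesis using cardD unfolding q_def by linarith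
qed




lemma Row_unique:
  fixes n d d' :: nat and K :: int
  assumes n: "n \<ge> 2" and K: "K \<ge> 1" and d: "d \<ge> 1" "d' \<ge> 1" and v: "v \<in> Vd n d" and v': "v' \<in> Vd n d'"
   and f: "\<forall>i<n. f i \<in> Row n K v i" and f': "\<forall>i<n. f i \<in> Row n K v' i"
  shows "v = v' \<and> d = d'"
proof -
  define u where "u j = int d' * v j - int d * v' j" for j
  have v0: "v 0 = int d" and v'0: "v' 0 = int d'" using Vd_props[OF v n] Vd_props[OF v' n] by auto
  have u0: "u 0 = 0" unfolding u_def v0 v'0 by simp
  have rowsum: "(\<Sum>j<n. f i j * u j) = 0" if i: "i < n" for i
  proof -
    have a: "(\<Sum>j<n. f i j * v j) = 0" using f i unfolding Row_def by auto
    have b: "(\<Sum>j<n. f i j * v' j) = 0" using f' i unfolding Row_def by auto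
    have "(\<Sum>j<n. f i j * u j) = int d' * (\<Sum>j<n. f i j * v j) - int d * (\<Sum>j<n. f i j * v' j)"
      unfolding u_def by (simp add: sum_subtractf sum_distrib_left algebra_simps)
    then show ?thesis using a b by simp
  qed
  have uz: "\<forall>j\<in>{1..<n}. u j = 0"
  proof (rule ccontr)
    assume nz: "\<not> (\<forall>j\<in>{1..<n}. u j = 0)"
    define M where "M = Max ((\<lambda>j. \<bar>u j\<bar>) ` {1..<n})"
    have ne: "{1..<n} \<noteq> {}" using n by auto
    have "M \<in> (\<lambda>j. \<bar>u j\<bar>) ` {1..<n}" unfolding M_def using ne by (intro Max_in) auto
    then obtain i where i: "i \<in> {1..<n}" "\<bar>u i\<bar> = M" by auto
    have Mge: "\<bar>u j\<bar> \<le> M" if "j \<in> {1..<n}" for j unfolding M_def using that by (intro Max_ge) auto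
    from nz obtain j0 where "j0 \<in> {1..<n}" "u j0 \<noteq> 0" by auto
    then have Mpos: "M > 0" using Mge[of j0] by auto
    have fi: "f i \<in> Row n K v i" using f i by auto
    then have box: "\<forall>j\<in>{1..<n}. lo n K i j \<le> f i j \<and> f i j \<le> lo n K i j + K" unfolding Row_def by auto
    have fii: "int n * K \<le> f i i" using bspec[OF box i(1)] unfolding lo_def by simp
    have fij: "\<bar>f i j\<bar> \<le> K" if "j \<in> {1..<n} - {i}" for j using bspec[OF box, of j] that K unfolding lo_def by auto
    have "0 = (\<Sum>j<n. f i j * u j)" using rowsum i by auto
    also have "{..<n} = insert 0 {1..<n}" using n by auto
    also have "(\<Sum>j\<in>insert 0 {1..<n}. f i j * u j) = (\<Sum>j\<in>{1..<n}. f i j * u j)" using u0 by simp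
    also have "\<dots> = f i i * u i + (\<Sum>j\<in>{1..<n} - {i}. f i j * u j)" using i by (subst sum.remove) auto
    finally have eq: "f i i * u i = - (\<Sum>j\<in>{1..<n} - {i}. f i j * u j)" by linarith
    have "\<bar>\<Sum>j\<in>{1..<n} - {i}. f i j * u j\<bar> \<le> (\<Sum>j\<in>{1..<n} - {i}. K * M)"
    proof -
      have "\<bar>\<Sum>j\<in>{1..<n} - {i}. f i j * u j\<bar> \<le> (\<Sum>j\<in>{1..<n} - {i}. \<bar>f i j * u j\<bar>)" by (rule sum_abs)
      also have "\<dots> \<le> (\<Sum>j\<in>{1..<n} - {i}. K * M)"
      proof (intro sum_mono)
        fix j assume j: "j \<in> {1..<n} - {i}"
        have "\<bar>f i j * u j\<bar> = \<bar>f i j\<bar> * \<bar>u j\<bar>" by (simp add: abs_mult)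
        also have "\<dots> \<le> K * M" using fij[OF j] Mge[of j] j by (intro mult_mono) auto
        finally show "\<bar>f i j * u j\<bar> \<le> K * M" .
      qed
      finally show ?thesis .
    qed
    also have "\<dots> = (int n - 2) * (K * M)" using i n by (simp add: of_nat_diff)
    finally have le1: "\<bar>f i i * u i\<bar> \<le> (int n - 2) * (K * M)" using eq by simp
    have "0 \<le> int n * K" using K by simp
    then have "0 \<le> f i i" using fii by linarith
    then have "\<bar>f i i * u i\<bar> = f i i * M" using i by (simp add: abs_mult)
    moreover have "int n * K * M \<le> f i i * M" using fii Mpos by (intro mult_right_mono) auto
    ultimately have "int n * (K * M) \<le> (int n - 2) * (K * M)" using le1 by (simp add: mult.assoc)
    then have "2 * (K * M) \<le> 0" by (simp add: algebra_simps)
    moreover have "K * M > 0" using K Mpos by simp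
    ultimately show False by linarith
  qed
  have m: "n - 1 \<in> {1..<n}" using n by auto
  have "u (n-1) = 0" using uz m by auto
  then have eqm: "int d' * v (n-1) = int d * v' (n-1)" unfolding u_def by simp
  have c1: "coprime (v (n-1)) (int d)" and c2: "coprime (v' (n-1)) (int d')"
    using Vd_props[OF v n] Vd_props[OF v' n] by auto
  have "int d dvd int d' * v (n-1)" using eqm by (metis dvd_triv_left)
  then have "int d dvd int d'" using c1 by (simp add: coprime_commute coprime_dvd_mult_left_iff)
  moreover have "int d' dvd int d * v' (n-1)" using eqm by (metis dvd_triv_left)
  then have "int d' dvd int d" using c2 by (simp add: coprime_commute coprime_dvd_mult_left_iff)
  ultimately have dd: "d = d'" by (simp add: dvd_antisym)
  have "v j = v' j" if "j \<in> {..<n}" for j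
  proof (cases "j = 0")
    case True then show ?thesis using v0 v'0 dd by simp
  next
    case False
    then have "u j = 0" using uz that by auto
    then show ?thesis unfolding u_def using dd d by simp
  qed
  then have "v = v'" using v v' dd unfolding Vd_def by (intro PiE_ext) auto
  then show ?thesis using dd by simp
qed

lemma root_char_poly:
  fixes n d :: nat and K lam :: int
  assumes n: "n \<ge> 2" and d: "d \<ge> 1" and v: "v \<in> Vd n d" and f: "\<forall>i<n. f i \<in> Row n K v i"
  shows "poly (char_poly (mat n n (\<lambda>(i,j). f i j + (if i = j then lam else 0)))) lam = 0"
proof -
  define A where "A = mat n n (\<lambda>(i,j). f i j + (if i = j then lam else 0))"
  define M where "M = mat n n (\<lambda>(i,j). - f i j)"
  have A: "A \<in> carrier_mat n n" and M: "M \<in> carrier_mat n n" unfolding A_def M_def by auto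
  have "poly (char_poly A) lam = det M" unfolding char_poly_def
    by (rule poly_det_cong[OF M char_poly_matrix_closed[OF A]])
       (auto simp: char_poly_matrix_def A_def M_def)
  also have "det M = 0"
  proof -
    have v0: "v 0 = int d" using Vd_props[OF v n] by auto
    have "vec n v \<in> carrier_vec n" by simp
    moreover have "vec n v \<noteq> 0\<^sub>v n"
    proof
      assume "vec n v = 0\<^sub>v n"
      then have "vec n v $ 0 = 0\<^sub>v n $ 0" by simp
      then show False using n v0 d by simp
    qed
    moreover have "M *\<^sub>v vec n v = 0\<^sub>v n"
    proof (rule eq_vecI)
      fix i assume "i < dim_vec (0\<^sub>v n :: int vec)"
      then have i: "i < n" by simp
      have "(M *\<^sub>v vec n v) $ i = (\<Sum>j\<in>{0..<n}. - f i j * v j)"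
        using i unfolding M_def by (simp add: scalar_prod_def)
      also have "\<dots> = - (\<Sum>j<n. f i j * v j)" by (simp add: sum_negf atLeast0LessThan)
      also have "(\<Sum>j<n. f i j * v j) = 0" using f i unfolding Row_def by auto
      finally show "(M *\<^sub>v vec n v) $ i = 0\<^sub>v n $ i" using i by simp
    qed (simp add: M_def)
    ultimately show ?thesis using det_0_iff_vec_prod_zero[OF M] by blast
  qed
  finally show ?thesis unfolding A_def .
qed




definition QQ :: "nat \<Rightarrow> int \<Rightarrow> nat \<Rightarrow> (int \<times> nat \<times> (nat \<Rightarrow> int) \<times> (nat \<Rightarrow> nat \<Rightarrow> int)) set" where
  "QQ n K X = Sigma {-K..K} (\<lambda>lam. Sigma {1..X} (\<lambda>d. Sigma (Vd n d) (\<lambda>v. PiE {..<n} (Row n K v))))"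

definition Phi :: "nat \<Rightarrow> (int \<times> nat \<times> (nat \<Rightarrow> int) \<times> (nat \<Rightarrow> nat \<Rightarrow> int)) \<Rightarrow> int mat" where
  "Phi n p = (case p of (lam, d, v, f) \<Rightarrow> mat n n (\<lambda>(i,j). f i j + (if i = j then lam else 0)))"

lemma finite_Vd: "finite (Vd n d)"
  unfolding Vd_def by (intro finite_PiE) auto

lemma finite_QQ: "finite (QQ n K X)"
  unfolding QQ_def by (intro finite_SigmaI finite_Vd finite_PiE finite_Row) auto

lemma card_fiber_bound:
  assumes "finite Q" "\<And>y. y \<in> f ` Q \<Longrightarrow> card {x\<in>Q. f x = y} \<le> m"
  shows "card Q \<le> m * card (f ` Q)"
proof -
  have "Q = (\<Union>y\<in>f ` Q. {x\<in>Q. f x = y})" by auto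
  then have "card Q = card (\<Union>y\<in>f ` Q. {x\<in>Q. f x = y})" by simp
  also have "\<dots> = (\<Sum>y\<in>f ` Q. card {x\<in>Q. f x = y})"
    using assms(1) by (intro card_UN_disjoint) auto
  also have "\<dots> \<le> (\<Sum>y\<in>f ` Q. m)" by (intro sum_mono assms(2))
  also have "\<dots> = m * card (f ` Q)" by simp
  finally show ?thesis .
qed

lemma Phi_carrier: "Phi n p \<in> carrier_mat n n"
  unfolding Phi_def by (cases p) auto

lemma QQ_fiber:
  fixes n :: nat and K :: int
  assumes n: "n \<ge> 2" and K: "K \<ge> 1"
  shows "card (QQ n K X) \<le> n * card (Phi n ` QQ n K X)"
proof (rule card_fiber_bound[OF finite_QQ])
  fix y assume "y \<in> Phi n ` QQ n K X"
  define F where "F = {x \<in> QQ n K X. Phi n x = y}"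
  have y: "y \<in> carrier_mat n n" using \<open>y \<in> _\<close> Phi_carrier by auto
  have mem: "lam \<in> {-K..K} \<and> d \<in> {1..X} \<and> v \<in> Vd n d \<and> f \<in> PiE {..<n} (Row n K v)"
    if "(lam, d, v, f) \<in> QQ n K X" for lam d v f using that unfolding QQ_def by auto
  have inj: "inj_on fst F"
  proof (rule inj_onI)
    fix p p' assume p: "p \<in> F" and p': "p' \<in> F" and eq: "fst p = fst p'"
    obtain lam d v f where pe: "p = (lam, d, v, f)" by (cases p) auto
    obtain lam' d' v' f' where pe': "p' = (lam', d', v', f')" by (cases p') auto
    have ll: "lam' = lam" using eq pe pe' by simp
    have m: "lam \<in> {-K..K}" "d \<in> {1..X}" "v \<in> Vd n d" "f \<in> PiE {..<n} (Row n K v)"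
      using mem[of lam d v f] p pe unfolding F_def by auto
    have m': "lam' \<in> {-K..K}" "d' \<in> {1..X}" "v' \<in> Vd n d'" "f' \<in> PiE {..<n} (Row n K v')"
      using mem[of lam' d' v' f'] p' pe' unfolding F_def by auto
    have PP: "Phi n p = Phi n p'" using p p' unfolding F_def by auto
    have ent: "f i j = f' i j" if "i < n" "j < n" for i j
    proof -
      have "Phi n p $$ (i,j) = Phi n p' $$ (i,j)" using PP by simp
      then show ?thesis using that ll unfolding pe pe' Phi_def by simp
    qed
    have ff: "f = f'"
    proof
      fix i show "f i = f' i"
      proof (cases "i < n")
        case True
        have fi: "f i \<in> Row n K v i" and fi': "f' i \<in> Row n K v' i" using m(4) m'(4) True by auto
        have "f i \<in> PiE {..<n} (\<lambda>j. {- (int n * int n * K) .. int n * int n * K})" using fi unfolding Row_def by auto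
        moreover have "f' i \<in> PiE {..<n} (\<lambda>j. {- (int n * int n * K) .. int n * int n * K})" using fi' unfolding Row_def by auto
        ultimately show ?thesis using ent True by (intro PiE_ext) auto
      next
        case False
        then show ?thesis using m(4) m'(4) by (auto simp: PiE_def extensional_def)
      qed
    qed
    have "\<forall>i<n. f i \<in> Row n K v i" "\<forall>i<n. f i \<in> Row n K v' i" using m(4) m'(4) ff by auto
    then have "v = v' \<and> d = d'" using Row_unique[OF n K _ _ m(3) m'(3)] m(2) m'(2) by auto
    then show "p = p'" using pe pe' ll ff by simp
  qed
  have roots: "fst ` F \<subseteq> {x. poly (char_poly y) x = 0}"
  proof
    fix x assume "x \<in> fst ` F"
    then obtain p where p: "p \<in> F" "x = fst p" by auto
    obtain lam d v f where pe: "p = (lam, d, v, f)" by (cases p) auto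
    have m: "d \<in> {1..X}" "v \<in> Vd n d" "f \<in> PiE {..<n} (Row n K v)"
      using mem[of lam d v f] p pe unfolding F_def by auto
    have "y = mat n n (\<lambda>(i,j). f i j + (if i = j then lam else 0))" using p pe unfolding F_def Phi_def by auto
    then have "poly (char_poly y) lam = 0" using root_char_poly[OF n _ m(2)] m by auto
    then show "x \<in> {x. poly (char_poly y) x = 0}" using p pe by simp
  qed
  have nz: "char_poly y \<noteq> 0" using degree_monic_char_poly[OF y] by auto
  have "card F = card (fst ` F)" using inj by (simp add: card_image)
  also have "\<dots> \<le> card {x. poly (char_poly y) x = 0}"
    by (intro card_mono roots poly_roots_finite nz)
  also have "\<dots> \<le> degree (char_poly y)" by (rule card_poly_roots_bound[OF nz])
  also have "\<dots> = n" using degree_monic_char_poly[OF y] by simp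
  finally show "card {x \<in> QQ n K X. Phi n x = y} \<le> n" unfolding F_def .
qed




lemma div_half_bound:
  fixes K :: int and d :: nat
  assumes "1 \<le> d" "int d \<le> K + 1"
  shows "real_of_int (K + 1) / (2 * real d) \<le> real_of_int ((K + 1) div int d)"
proof -
  define q where "q = (K + 1) div int d"
  define r where "r = (K + 1) mod int d"
  have dpos: "int d > 0" using assms by simp
  have e: "K + 1 = int d * q + r" unfolding q_def r_def by simp
  have "int d div int d \<le> (K + 1) div int d" using assms dpos by (intro zdiv_mono1) auto
  then have q1: "q \<ge> 1" unfolding q_def using dpos by simp
  have "r < int d" unfolding r_def using dpos by simp
  also have "int d \<le> int d * q" using q1 dpos by simp
  finally have "r < int d * q" .
  then have "K + 1 \<le> 2 * int d * q" using e by (simp add: algebra_simps)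
  then have "real_of_int (K + 1) \<le> real_of_int (2 * int d * q)"
    by (simp only: of_int_le_iff)
  also have "real_of_int (2 * int d * q) = real_of_int q * (2 * real d)" by simp
  finally have le: "real_of_int (K + 1) \<le> real_of_int q * (2 * real d)" .
  have "2 * real d > 0" using assms by simp
  then show ?thesis unfolding q_def[symmetric] using le by (simp only: pos_divide_le_eq)
qed

lemma card_QQ_lower:
  fixes n :: nat and K :: int
  assumes n: "n \<ge> 2" and K: "K \<ge> 1"
  shows "real_of_int (K+1) ^ (n^2 - n + 1) * (ln (real_of_int (K+1) + 1) / 2 ^ (n+1)) \<le> real (card (QQ n K (nat (K+1))))"
proof -
  define X where "X = nat (K + 1)"
  define r where "r = real_of_int (K + 1)"
  have rpos: "r > 0" unfolding r_def using K by simp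
  have rX: "real X = r" unfolding X_def r_def using K by simp
  have cardQ: "card (QQ n K X) = (\<Sum>lam\<in>{-K..K}. \<Sum>d\<in>{1..X}. \<Sum>v\<in>Vd n d. \<Prod>i<n. card (Row n K v i))"
    unfolding QQ_def by (simp add: card_SigmaI finite_SigmaI finite_Vd finite_PiE finite_Row card_PiE)
  have termb: "r ^ ((n-1)*n) / (2 * real d) ^ n \<le> real (\<Prod>i<n. card (Row n K v i))"
    if d: "d \<in> {1..X}" and v: "v \<in> Vd n d" for d v
  proof -
    define c0 where "c0 = r ^ (n-2) * (r / (2 * real d))"
    have c0: "0 \<le> c0" unfolding c0_def using rpos d by simp
    have dX: "int d \<le> K + 1" using d unfolding X_def by auto
    have each: "c0 \<le> real (card (Row n K v i))" if i: "i < n" for i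
    proof -
      have "c0 \<le> r ^ (n-2) * real_of_int ((K + 1) div int d)"
        unfolding c0_def r_def using div_half_bound[OF _ dX] d K by (intro mult_left_mono) auto
      also have "\<dots> = real_of_int ((K+1)^(n-2) * ((K + 1) div int d))" unfolding r_def by simp
      also have "\<dots> \<le> real_of_int (int (card (Row n K v i)))"
        using Row_card[OF n K _ v i] d by (subst of_int_le_iff) auto
      finally show ?thesis by simp
    qed
    have "(\<Prod>i<n. c0) \<le> (\<Prod>i<n. real (card (Row n K v i)))"
      using each c0 by (intro prod_mono) auto
    moreover have "(\<Prod>i<n. c0) = r ^ ((n-1)*n) / (2 * real d) ^ n"
    proof -
      define k where "k = n - 2"
      have k: "n = Suc (Suc k)" using n unfolding k_def by simp
      have "r ^ (n-2) * r = r ^ (n-1)" unfolding k by simp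
      then have "c0 = r ^ (n-1) / (2 * real d)" unfolding c0_def by (simp add: field_simps)
      then show ?thesis by (simp add: power_divide power_mult)
    qed
    ultimately show ?thesis by simp
  qed
  have perd: "r ^ ((n-1)*n) / 2 ^ n * (real (totient d) / (real d)^2) \<le> (\<Sum>v\<in>Vd n d. real (\<Prod>i<n. card (Row n K v i)))"
    if d: "d \<in> {1..X}" for d
  proof -
    have dpos: "real d > 0" using d by simp
    have "(\<Sum>v\<in>Vd n d. r ^ ((n-1)*n) / (2 * real d) ^ n) \<le> (\<Sum>v\<in>Vd n d. real (\<Prod>i<n. card (Row n K v i)))"
      using termb[OF d] by (intro sum_mono) auto
    moreover have "(\<Sum>v\<in>Vd n d. r ^ ((n-1)*n) / (2 * real d) ^ n) = real (totient d) * (2 * real d + 1) ^ (n - 2) * (r ^ ((n-1)*n) / (2 * real d) ^ n)"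
    proof -
      have cV: "real (card (Vd n d)) = real (totient d) * (2 * real d + 1) ^ (n - 2)"
        unfolding card_Vd[OF n] by (simp add: add.commute)
      show ?thesis unfolding sum_constant cV by simp
    qed
    moreover have "r ^ ((n-1)*n) / 2 ^ n * (real (totient d) / (real d)^2) \<le> real (totient d) * (2 * real d + 1) ^ (n - 2) * (r ^ ((n-1)*n) / (2 * real d) ^ n)"
    proof -
      have nn: "n = (n - 2) + 2" using n by simp
      have pw: "(real d) ^ n = (real d) ^ (n-2) * (real d)^2" by (subst nn) (simp only: power_add)
      have "r ^ ((n-1)*n) / 2 ^ n * (real (totient d) / (real d)^2) = real (totient d) * (real d) ^ (n - 2) * (r ^ ((n-1)*n) / (2 * real d) ^ n)"
        using dpos unfolding power_mult_distrib pw by (simp add: field_simps)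
      also have "\<dots> \<le> real (totient d) * (2 * real d + 1) ^ (n - 2) * (r ^ ((n-1)*n) / (2 * real d) ^ n)"
        using dpos rpos by (intro mult_right_mono mult_left_mono power_mono) auto
      finally show ?thesis .
    qed
    ultimately show ?thesis by linarith
  qed
  define T where "T = r ^ ((n-1)*n) / 2 ^ n * (ln (real X + 1) / 2)"
  have Tnn: "0 \<le> T" unfolding T_def using rpos by simp
  have sumd: "T \<le> (\<Sum>d\<in>{1..X}. \<Sum>v\<in>Vd n d. real (\<Prod>i<n. card (Row n K v i)))"
  proof -
    have "T \<le> r ^ ((n-1)*n) / 2 ^ n * (\<Sum>d=1..X. real (totient d) / (real d)^2)"
      unfolding T_def using totient_sum_log[of X] rpos by (intro mult_left_mono) auto
    also have "\<dots> = (\<Sum>d=1..X. r ^ ((n-1)*n) / 2 ^ n * (real (totient d) / (real d)^2))"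
      by (simp add: sum_distrib_left)
    also have "\<dots> \<le> (\<Sum>d\<in>{1..X}. \<Sum>v\<in>Vd n d. real (\<Prod>i<n. card (Row n K v i)))"
      by (intro sum_mono perd)
    finally show ?thesis .
  qed
  have "real (card (QQ n K X)) = (\<Sum>lam\<in>{-K..K}. \<Sum>d\<in>{1..X}. \<Sum>v\<in>Vd n d. real (\<Prod>i<n. card (Row n K v i)))"
    unfolding cardQ by simp
  also have "\<dots> \<ge> (\<Sum>lam\<in>{-K..K}. T)" by (intro sum_mono sumd)
  finally have "real (card {-K..K}) * T \<le> real (card (QQ n K X))" by simp
  moreover have "r \<le> real (card {-K..K})" unfolding r_def using K by simp
  ultimately have "r * T \<le> real (card (QQ n K X))" using Tnn by (meson mult_right_mono order_trans)
  moreover have "r * T = r ^ (n^2 - n + 1) * (ln (r + 1) / 2 ^ (n+1))"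
  proof -
    have ex: "n^2 - n + 1 = Suc ((n-1)*n)" by (simp add: power2_eq_square diff_mult_distrib)
    show ?thesis unfolding T_def ex rX by (simp add: field_simps)
  qed
  ultimately show ?thesis unfolding r_def X_def by simp
qed




lemma Phi_in_S:
  fixes n :: nat and K :: int and B :: real
  assumes n: "n \<ge> 2" and K: "K \<ge> 1" and KB: "real_of_int (2 * int n * int n * K) \<le> B"
    and p: "p \<in> QQ n K X"
  shows "Phi n p \<in> {A :: int mat. A \<in> carrier_mat n n \<and>
                 (\<forall>i<n. \<forall>j<n. real_of_int \<bar>A $$ (i, j)\<bar> \<le> B) \<and>
                 (\<exists>q :: int poly. degree q = 1 \<and> q dvd char_poly A)}"
proof -
  obtain lam d v f where pe: "p = (lam, d, v, f)" by (cases p) auto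
  have m: "lam \<in> {-K..K}" "d \<in> {1..X}" "v \<in> Vd n d" "f \<in> PiE {..<n} (Row n K v)"
    using p pe unfolding QQ_def by auto
  define A where "A = mat n n (\<lambda>(i,j). f i j + (if i = j then lam else 0))"
  have PA: "Phi n p = A" unfolding pe Phi_def A_def by simp
  have bnd: "real_of_int \<bar>A $$ (i, j)\<bar> \<le> B" if ij: "i < n" "j < n" for i j
  proof -
    have "f i \<in> Row n K v i" using m(4) ij by auto
    then have "f i j \<in> {- (int n * int n * K) .. int n * int n * K}" using ij unfolding Row_def by auto
    then have fb: "\<bar>f i j\<bar> \<le> int n * int n * K" by auto
    have "\<bar>A $$ (i, j)\<bar> \<le> \<bar>f i j\<bar> + \<bar>lam\<bar>" using ij unfolding A_def by auto
    also have "\<dots> \<le> int n * int n * K + K" using fb m(1) by auto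
    also have "\<dots> \<le> 2 * int n * int n * K"
    proof -
      have "1 * 1 \<le> int n * int n" using n by (intro mult_mono) auto
      then have "1 * K \<le> int n * int n * K" using K by (intro mult_right_mono) auto
      then show ?thesis by linarith
    qed
    finally have "real_of_int \<bar>A $$ (i, j)\<bar> \<le> real_of_int (2 * int n * int n * K)" by (simp only: of_int_le_iff)
    then show ?thesis using KB by linarith
  qed
  have root: "poly (char_poly A) lam = 0" unfolding A_def
    using root_char_poly[OF n _ m(3)] m by auto
  have "degree [:- lam, 1:] = 1" by simp
  moreover have "[:- lam, 1:] dvd char_poly A" using root by (simp add: poly_eq_0_iff_dvd)
  ultimately have ex: "\<exists>q :: int poly. degree q = 1 \<and> q dvd char_poly A" by blast
  have car: "A \<in> carrier_mat n n" unfolding A_def by simp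
  show ?thesis unfolding PA using bnd ex car by blast
qed

lemma finite_S:
  fixes n :: nat and B :: real
  shows "finite {A :: int mat. A \<in> carrier_mat n n \<and>
                 (\<forall>i<n. \<forall>j<n. real_of_int \<bar>A $$ (i, j)\<bar> \<le> B) \<and>
                 (\<exists>q :: int poly. degree q = 1 \<and> q dvd char_poly A)}" (is "finite ?S")
proof -
  define b where "b = \<lceil>B\<rceil>"
  have "?S \<subseteq> (\<lambda>g. mat n n (\<lambda>(i,j). g i j)) ` (PiE {..<n} (\<lambda>_. PiE {..<n} (\<lambda>_. {-b..b})))"
  proof
    fix A assume A: "A \<in> ?S"
    define g where "g = (\<lambda>i\<in>{..<n}. \<lambda>j\<in>{..<n}. A $$ (i,j))"
    have "A = mat n n (\<lambda>(i,j). g i j)"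
      using A unfolding g_def by (intro eq_matI) auto
    moreover have "g \<in> PiE {..<n} (\<lambda>_. PiE {..<n} (\<lambda>_. {-b..b}))"
    proof -
      have "\<bar>A $$ (i,j)\<bar> \<le> b" if "i < n" "j < n" for i j
      proof -
        have "real_of_int \<bar>A $$ (i,j)\<bar> \<le> B" using A that by auto
        also have "B \<le> real_of_int b" unfolding b_def by (rule le_of_int_ceiling)
        finally show ?thesis by (simp only: of_int_le_iff)
      qed
      then have "- b \<le> A $$ (i,j) \<and> A $$ (i,j) \<le> b" if "i < n" "j < n" for i j
        using that by (metis abs_le_iff minus_le_iff)
      then show ?thesis unfolding g_def by (auto simp: PiE_iff)
    qed
    ultimately show "A \<in> (\<lambda>g. mat n n (\<lambda>(i,j). g i j)) ` (PiE {..<n} (\<lambda>_. PiE {..<n} (\<lambda>_. {-b..b})))" by blast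
  qed
  moreover have "finite ((\<lambda>g. mat n n (\<lambda>(i,j). g i j)) ` (PiE {..<n} (\<lambda>_. PiE {..<n} (\<lambda>_. {-b..b}))))"
    by (intro finite_imageI finite_PiE) auto
  ultimately show ?thesis by (rule finite_subset)
qed




theorem corollary6p6:
  fixes n :: nat
  assumes "n \<ge> 2"
  shows "\<exists>c > 0. \<forall>\<^sub>F (B::real) in at_top.
    real (card {A :: int mat. A \<in> carrier_mat n n \<and>
                 (\<forall>i<n. \<forall>j<n. real_of_int \<bar>A $$ (i, j)\<bar> \<le> B) \<and>
                 (\<exists>q :: int poly. degree q = 1 \<and> q dvd char_poly A)})
      \<ge> c * B ^ (n^2 - n + 1) * ln B"
proof -
  have n: "n \<ge> 2" by (rule assms)
  define N where "N = n^2 - n + 1"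
  define n2 where "n2 = 2 * real n ^ 2"
  define c where "c = 1 / (real n * 2 ^ (n+2) * n2 ^ N)"
  have "real n ^ 2 \<ge> 2 ^ 2" using n by (intro power_mono) auto
  then have n2ge: "n2 \<ge> 8" unfolding n2_def by simp
  then have n2pos: "n2 > 0" by simp
  have cpos: "c > 0" unfolding c_def using n n2pos by simp
  have ev: "\<forall>\<^sub>F B in at_top. n2 * n2 \<le> (B::real)" by (rule eventually_ge_at_top)
  show ?thesis
  proof (rule exI[of _ c], rule conjI[OF cpos], rule eventually_mono[OF ev])
    fix B :: real assume B: "n2 * n2 \<le> B"
    let ?S = "{A :: int mat. A \<in> carrier_mat n n \<and>
                 (\<forall>i<n. \<forall>j<n. real_of_int \<bar>A $$ (i, j)\<bar> \<le> B) \<and>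
                 (\<exists>q :: int poly. degree q = 1 \<and> q dvd char_poly A)}"
    define K where "K = \<lfloor>B / n2\<rfloor>"
    define X where "X = nat (K + 1)"
    have "n2 * n2 > 0" using n2pos by simp
    then have Bpos: "B > 0" using B by linarith
    have Bn: "n2 \<le> B / n2" using B n2pos by (simp add: pos_le_divide_eq)
    have "1 \<le> B / n2" using Bn n2ge by linarith
    then have K1: "K \<ge> 1" unfolding K_def by (simp only: one_le_floor)
    have "real_of_int K \<le> B / n2" unfolding K_def by (rule of_int_floor_le)
    then have "n2 * real_of_int K \<le> B" using n2pos by (simp add: pos_le_divide_eq mult.commute)
    moreover have "real_of_int (2 * int n * int n * K) = n2 * real_of_int K"
      unfolding n2_def by (simp add: power2_eq_square)
    ultimately have KB: "real_of_int (2 * int n * int n * K) \<le> B" by linarith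
    have rK: "B / n2 \<le> real_of_int (K + 1)" unfolding K_def
      using real_of_int_floor_add_one_gt[of "B / n2"] by simp
    have sub: "Phi n ` QQ n K X \<subseteq> ?S" using Phi_in_S[OF n K1 KB] by blast
    have c1: "card (Phi n ` QQ n K X) \<le> card ?S" by (rule card_mono[OF finite_S sub])
    have c2: "card (QQ n K X) \<le> n * card (Phi n ` QQ n K X)" by (rule QQ_fiber[OF n K1])
    have c3: "real_of_int (K+1) ^ N * (ln (real_of_int (K+1) + 1) / 2 ^ (n+1)) \<le> real (card (QQ n K X))"
      unfolding N_def X_def by (rule card_QQ_lower[OF n K1])
    have "real (card (QQ n K X)) \<le> real n * real (card ?S)"
    proof -
      have "n * card (Phi n ` QQ n K X) \<le> n * card ?S" by (rule mult_le_mono2[OF c1])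
      then have "card (QQ n K X) \<le> n * card ?S" using c2 by linarith
      then have "real (card (QQ n K X)) \<le> real (n * card ?S)" by (simp only: of_nat_le_iff)
      then show ?thesis by (simp only: of_nat_mult)
    qed
    with c3 have main: "real_of_int (K+1) ^ N * (ln (real_of_int (K+1) + 1) / 2 ^ (n+1)) \<le> real n * real (card ?S)"
      (is "?L \<le> _") by linarith
    have npos: "real n > 0" using n by simp
    from main have "?L \<le> real (card ?S) * real n" by (simp only: mult.commute)
    then have fin: "?L / real n \<le> real (card ?S)" using npos by (simp only: pos_divide_le_eq)
    have lnB: "ln B / 2 \<le> ln (real_of_int (K+1) + 1)"
    proof -
      have bpos: "B / n2 > 0" using Bpos n2pos by simp
      have "B \<le> (B / n2) ^ 2"
      proof -
        have "B * (n2 * n2) \<le> B * B" using B Bpos by (intro mult_left_mono) auto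
        then have "B \<le> B * B / (n2 * n2)" using n2pos by (simp add: pos_le_divide_eq)
        then show ?thesis by (simp add: power2_eq_square)
      qed
      then have "ln B \<le> ln ((B / n2) ^ 2)" using Bpos by (rule ln_mono)
      also have "\<dots> = 2 * ln (B / n2)" using bpos by (simp add: ln_realpow)
      finally have "ln B / 2 \<le> ln (B / n2)" by simp
      also have "ln (B / n2) \<le> ln (real_of_int (K+1) + 1)" using bpos rK by simp
      finally show ?thesis .
    qed
    have "1 * 8 \<le> n2 * n2" using n2ge by (intro mult_mono) auto
    then have "1 \<le> B" using B by linarith
    then have lnBnn: "0 \<le> ln B" by simp
    have pw: "(B / n2) ^ N \<le> real_of_int (K+1) ^ N" using rK Bpos n2pos by (intro power_mono) auto
    have "c * B ^ N * ln B = ((B / n2) ^ N * ((ln B / 2) / 2 ^ (n+1))) / real n"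
    proof -
      have e1: "(B / n2) ^ N = B ^ N / n2 ^ N" by (rule power_divide)
      have e2: "(ln B / 2) / 2 ^ (n+1) = ln B / 2 ^ (n+2)" by simp
      show ?thesis unfolding c_def e1 e2 by simp
    qed
    also have "\<dots> \<le> (real_of_int (K+1) ^ N * (ln (real_of_int (K+1) + 1) / 2 ^ (n+1))) / real n"
    proof -
      have "0 \<le> real_of_int (K+1)" using K1 by simp
      then have "0 \<le> real_of_int (K+1) ^ N" by simp
      then show ?thesis using pw lnB lnBnn n by (intro divide_right_mono mult_mono) auto
    qed
    also have "\<dots> \<le> real (card ?S)" by (rule fin)
    finally show "c * B ^ (n^2 - n + 1) * ln B \<le> real (card ?S)" unfolding N_def .
  qed
qed


end
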